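(* Let $\Sigma$ be a finite alphabet and $\Sigma^*$ the set of finite strings over $\Sigma$. Let $p$ and $q$ be probability distributions on $\Sigma^*$ with $p \ll q$ (i.e. $q(x)=0 \Rightarrow p(x)=0$). Let $X^{(1)},\dots,X^{(N)}$ be i.i.d. with law $q$, let $W \coloneqq p(X)/q(X)$ for $X\sim q$, and assume $\mathbb{E}_q[W^4]<\infty$. Define the importance resampling distribution $$\widehat{p}_N(x) \coloneqq \sum_{n=1}^N \frac{w^{(n)}}{\sum_{m=1}^N w^{(m)}}\,\mathbf{1}\{X^{(n)}=x\},\qquad w^{(n)} \coloneqq \frac{p(X^{(n)})}{q(X^{(n)})},$$ let $\overline{p}_N \coloneqq \mathbb{E}[\widehat{p}_N]$ (expectation over the samples), and let $\chi^2(p\|q)\coloneqq \mathbb{E}_q[(W-1)^2]$. Then, as $N\to\infty$: 1. $\|\overline{p}_N - p\|_1 = O\!\left(\sqrt{(1+\chi^2(p\|q))/N}\right)$; 2. $\|\overline{p}_N - p\|_2^2 = O\!\left((1+\chi^2(p\|q))/N\right)$; 3. $\mathbb{E}\big[\|\widehat{p}_N - p\|_2^2\big] = O\!\left((1+\chi^2(p\|q))/N\right)$.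
   Context: Norms are over functions on $\Sigma^*$: $\|f\|_1=\sum_{x\in\Sigma^*}|f(x)|$, $\|f\|_2^2=\sum_{x\in\Sigma^*} f(x)^2$. $\widehat{p}_N$ is a random probability distribution on $\Sigma^*$ (almost surely well-defined since the weights are positive with probability one on the support of $p$... more precisely the normalizer $\sum_m w^{(m)}$ is a.s. positive when needed). *)

theory Defs
  imports "HOL-Probability.Probability" "HOL-Library.Landau_Symbols"
begin

text \<open>Strings over a finite alphabet 'a are 'a list; distributions on strings are 'a list pmf.\<close>

definition abs_cont :: "'b pmf \<Rightarrow> 'b pmf \<Rightarrow> bool" where
  "abs_cont p q \<longleftrightarrow> (\<forall>x. pmf q x = 0 \<longrightarrow> pmf p x = 0)"

definition imp_weight :: "'b pmf \<Rightarrow> 'b pmf \<Rightarrow> 'b \<Rightarrow> real" where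
  "imp_weight p q x = pmf p x / pmf q x"

definition chi2 :: "'b pmf \<Rightarrow> 'b pmf \<Rightarrow> real" where
  "chi2 p q = measure_pmf.expectation q (\<lambda>x. (imp_weight p q x - 1)^2)"

text \<open>Importance resampling distribution from samples xs = [X1,...,XN]
  (with the HOL convention t/0 = 0 on the null event where all weights vanish).\<close>
definition hat_p :: "'b pmf \<Rightarrow> 'b pmf \<Rightarrow> 'b list \<Rightarrow> 'b \<Rightarrow> real" where
  "hat_p p q xs x =
     (\<Sum>n<length xs. imp_weight p q (xs ! n) / (\<Sum>m<length xs. imp_weight p q (xs ! m))
        * (if xs ! n = x then 1 else 0))"

definition bar_p :: "'b pmf \<Rightarrow> 'b pmf \<Rightarrow> nat \<Rightarrow> 'b \<Rightarrow> real" where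
  "bar_p p q N x = measure_pmf.expectation (replicate_pmf N q) (\<lambda>xs. hat_p p q xs x)"

definition norm1 :: "('b \<Rightarrow> real) \<Rightarrow> real" where
  "norm1 f = (\<Sum>\<^sub>\<infinity>x. \<bar>f x\<bar>)"

definition norm2sq :: "('b \<Rightarrow> real) \<Rightarrow> real" where
  "norm2sq f = (\<Sum>\<^sub>\<infinity>x. (f x)^2)"

end

theory Submission imports Defs begin


definition cnt :: "'b pmf \<Rightarrow> 'b pmf \<Rightarrow> 'b list \<Rightarrow> 'b \<Rightarrow> real" where
  "cnt p q xs x = sum_list (map (\<lambda>y. imp_weight p q y * (if y = x then 1 else 0)) xs)"
definition SS :: "'b pmf \<Rightarrow> 'b pmf \<Rightarrow> 'b list \<Rightarrow> real" where
  "SS p q xs = sum_list (map (imp_weight p q) xs)"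

lemma w_nonneg: "imp_weight p q x \<ge> 0" by (simp add: imp_weight_def)

lemma sum_list_map_nth: "sum_list (map g xs) = (\<Sum>n<length xs. g (xs ! n))"
  by (simp add: sum_list_sum_nth atLeast0LessThan)

lemma hat_eq: "hat_p p q xs x = cnt p q xs x / SS p q xs"
  unfolding hat_p_def cnt_def SS_def sum_list_map_nth
  by (simp add: sum_divide_distrib)

lemma cnt_nonneg: "cnt p q xs x \<ge> 0"
  unfolding cnt_def by (rule sum_list_nonneg) (auto simp: w_nonneg)

lemma SS_nonneg: "SS p q xs \<ge> 0"
  unfolding SS_def by (rule sum_list_nonneg) (auto simp: w_nonneg)

lemma cnt_sum_le: "finite F \<Longrightarrow> (\<Sum>x\<in>F. cnt p q xs x) \<le> SS p q xs"
proof (induction xs)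
  case Nil then show ?case by (simp add: cnt_def SS_def)
next
  case (Cons y ys)
  have "(\<Sum>x\<in>F. imp_weight p q y * (if y = x then 1 else 0)) \<le> imp_weight p q y"
  proof -
    have "(\<Sum>x\<in>F. imp_weight p q y * (if y = x then 1 else 0)) = imp_weight p q y * (\<Sum>x\<in>F. (if y = x then 1 else 0))"
      by (simp add: sum_distrib_left)
    also have "\<dots> = imp_weight p q y * (if y \<in> F then 1 else 0)"
      using Cons.prems by (simp add: sum.delta')
    also have "\<dots> \<le> imp_weight p q y" by (simp add: w_nonneg)
    finally show ?thesis .
  qed
  then show ?case using Cons by (simp add: cnt_def SS_def sum.distrib)
qed

lemma cnt_le: "cnt p q xs x \<le> SS p q xs"
  using cnt_sum_le[of "{x}" p q xs] by simp

lemma cnt_out: "x \<notin> set xs \<Longrightarrow> cnt p q xs x = 0"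
  unfolding cnt_def by (induction xs) auto

lemma hat_nonneg: "hat_p p q xs x \<ge> 0"
  by (simp add: hat_eq cnt_nonneg SS_nonneg)

lemma hat_sum_le: "finite F \<Longrightarrow> (\<Sum>x\<in>F. hat_p p q xs x) \<le> 1"
proof -
  assume F: "finite F"
  have "(\<Sum>x\<in>F. hat_p p q xs x) = (\<Sum>x\<in>F. cnt p q xs x) / SS p q xs"
    by (simp add: hat_eq sum_divide_distrib)
  also have "\<dots> \<le> 1"
    using cnt_sum_le[OF F, of p q xs] SS_nonneg[of p q xs]
    by (cases "SS p q xs = 0") (auto simp: divide_le_eq_1)
  finally show ?thesis .
qed

lemma hat_le1: "hat_p p q xs x \<le> 1"
  using hat_sum_le[of "{x}" p q xs] by simp

lemma cnt_hat: "cnt p q xs x = hat_p p q xs x * SS p q xs"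
proof (cases "SS p q xs = 0")
  case True
  then show ?thesis using cnt_le[of p q xs x] cnt_nonneg[of p q xs x] by simp
next
  case False
  then show ?thesis by (simp add: hat_eq)
qed

lemma hat_out: "x \<notin> set xs \<Longrightarrow> hat_p p q xs x = 0"
  by (simp add: hat_eq cnt_out)

lemma nn_hat_le1: "(\<integral>\<^sup>+x. ennreal (hat_p p q xs x) \<partial>count_space UNIV) \<le> 1"
proof -
  have "(\<integral>\<^sup>+x. ennreal (hat_p p q xs x) \<partial>count_space UNIV)
      = (\<integral>\<^sup>+x. ennreal (hat_p p q xs x) * indicator (set xs) x \<partial>count_space UNIV)"
    by (intro nn_integral_cong) (auto simp: indicator_def hat_out)
  also have "\<dots> = (\<integral>\<^sup>+x. ennreal (hat_p p q xs x) \<partial>count_space (set xs))"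
    by (simp add: nn_integral_count_space_indicator)
  also have "\<dots> = (\<Sum>x\<in>set xs. ennreal (hat_p p q xs x))"
    by (simp add: nn_integral_count_space_finite)
  also have "\<dots> = ennreal (\<Sum>x\<in>set xs. hat_p p q xs x)"
    by (simp add: hat_nonneg)
  also have "\<dots> \<le> 1" using hat_sum_le[of "set xs" p q xs] by simp
  finally show ?thesis .
qed


lemma rep_Suc_nn:
  "(\<integral>\<^sup>+xs. h xs \<partial>measure_pmf (replicate_pmf (Suc N) q)) =
   (\<integral>\<^sup>+x. \<integral>\<^sup>+xs. h (x#xs) \<partial>measure_pmf (replicate_pmf N q) \<partial>measure_pmf q)"
  by (simp add: nn_integral_return)

lemma G:
  fixes M :: "'b pmf"
  assumes "\<And>x. h x \<ge> 0" "(\<integral>\<^sup>+x. ennreal (h x) \<partial>M) = ennreal r" "r \<ge> 0"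
  shows "integrable M h \<and> measure_pmf.expectation M h = r"
proof
  show "integrable M h"
    by (rule integrableI_nonneg) (use assms in auto)
  show "measure_pmf.expectation M h = r"
    by (subst integral_eq_nn_integral) (use assms in auto)
qed

lemma G2:
  fixes M :: "'b pmf"
  assumes "\<And>x. h x \<ge> 0" "integrable M h"
  shows "(\<integral>\<^sup>+x. ennreal (h x) \<partial>M) = ennreal (measure_pmf.expectation M h)"
  using assms by (subst nn_integral_eq_integral) auto

lemma Sf_nonneg: "(\<And>x. f x \<ge> (0::real)) \<Longrightarrow> sum_list (map f xs) \<ge> 0"
  by (induction xs) (auto intro: add_nonneg_nonneg)

lemma moments:
  fixes f :: "'b \<Rightarrow> real" and q :: "'b pmf"
  assumes nn: "\<And>x. f x \<ge> 0" and i1: "integrable q f" and i2: "integrable q (\<lambda>x. (f x)^2)"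
  shows "integrable (replicate_pmf N q) (\<lambda>xs. sum_list (map f xs)) \<and>
     measure_pmf.expectation (replicate_pmf N q) (\<lambda>xs. sum_list (map f xs))
        = real N * measure_pmf.expectation q f \<and>
     integrable (replicate_pmf N q) (\<lambda>xs. (sum_list (map f xs))^2) \<and>
     measure_pmf.expectation (replicate_pmf N q) (\<lambda>xs. (sum_list (map f xs))^2)
        = real N * measure_pmf.expectation q (\<lambda>x. (f x)^2)
          + real N * (real N - 1) * (measure_pmf.expectation q f)^2"
proof (induction N)
  case 0
  then show ?case by (simp add: integrable_measure_pmf_finite)
next
  case (Suc N)
  define M where "M = replicate_pmf N q"
  define B where "B = measure_pmf.expectation q f"
  define A where "A = measure_pmf.expectation q (\<lambda>x. (f x)^2)"
  let ?S = "\<lambda>xs. sum_list (map f xs)"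
  have B0: "B \<ge> 0" unfolding B_def by (simp add: nn)
  have A0: "A \<ge> 0" unfolding A_def by simp
  have iS: "integrable M ?S" and eS: "measure_pmf.expectation M ?S = real N * B"
    and iS2: "integrable M (\<lambda>xs. (?S xs)^2)"
    and eS2: "measure_pmf.expectation M (\<lambda>xs. (?S xs)^2) = real N * A + real N * (real N - 1) * B^2"
    using Suc.IH unfolding M_def A_def B_def by auto
  have Snn: "\<And>xs. ?S xs \<ge> 0" using Sf_nonneg nn by blast
  have inner1: "(\<integral>\<^sup>+xs. ennreal (f x + ?S xs) \<partial>M) = ennreal (f x + real N * B)" for x
  proof -
    have "(\<integral>\<^sup>+xs. ennreal (f x + ?S xs) \<partial>M) = ennreal (measure_pmf.expectation M (\<lambda>xs. f x + ?S xs))"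
      by (rule G2) (use nn Snn iS in auto)
    also have "measure_pmf.expectation M (\<lambda>xs. f x + ?S xs) = f x + real N * B"
      using iS eS by (simp add: integral_add)
    finally show ?thesis .
  qed
  have "(\<integral>\<^sup>+xs. ennreal (?S xs) \<partial>replicate_pmf (Suc N) q) = (\<integral>\<^sup>+x. ennreal (f x + real N * B) \<partial>q)"
    by (subst rep_Suc_nn) (simp add: inner1[unfolded M_def])
  also have "\<dots> = ennreal (measure_pmf.expectation q (\<lambda>x. f x + real N * B))"
    by (rule G2) (use nn B0 i1 in auto)
  also have "measure_pmf.expectation q (\<lambda>x. f x + real N * B) = real (Suc N) * B"
    using i1 by (simp add: integral_add B_def algebra_simps)
  finally have r1: "integrable (replicate_pmf (Suc N) q) ?S \<and> measure_pmf.expectation (replicate_pmf (Suc N) q) ?S = real (Suc N) * B"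
    by (intro G) (use Snn B0 in auto)
  have inner2: "(\<integral>\<^sup>+xs. ennreal ((f x + ?S xs)^2) \<partial>M) = ennreal ((f x)^2 + 2 * f x * (real N * B) + (real N * A + real N * (real N - 1) * B^2))" for x
  proof -
    have "(\<integral>\<^sup>+xs. ennreal ((f x + ?S xs)^2) \<partial>M) = ennreal (measure_pmf.expectation M (\<lambda>xs. (f x)^2 + 2 * f x * ?S xs + (?S xs)^2))"
    proof -
      have eq: "(f x + ?S xs)^2 = (f x)^2 + 2 * f x * ?S xs + (?S xs)^2" for xs
        by (simp add: power2_sum)
      show ?thesis unfolding eq
        by (rule G2) (use iS iS2 nn Snn in auto)
    qed
    also have "measure_pmf.expectation M (\<lambda>xs. (f x)^2 + 2 * f x * ?S xs + (?S xs)^2) = (f x)^2 + 2 * f x * (real N * B) + (real N * A + real N * (real N - 1) * B^2)"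
      using iS eS iS2 eS2 by (simp add: integral_add)
    finally show ?thesis .
  qed
  have "(\<integral>\<^sup>+xs. ennreal ((?S xs)^2) \<partial>replicate_pmf (Suc N) q) = (\<integral>\<^sup>+x. ennreal ((f x)^2 + 2 * f x * (real N * B) + (real N * A + real N * (real N - 1) * B^2)) \<partial>q)"
    by (subst rep_Suc_nn) (simp add: inner2[unfolded M_def])
  also have "\<dots> = ennreal (measure_pmf.expectation q (\<lambda>x. (f x)^2 + 2 * f x * (real N * B) + (real N * A + real N * (real N - 1) * B^2)))"
  proof (rule G2)
    have NN: "real N * (real N - 1) \<ge> 0" by (cases N) auto
    show "0 \<le> (f x)^2 + 2 * f x * (real N * B) + (real N * A + real N * (real N - 1) * B^2)" for x
    proof -
      have t: "0 \<le> real N * (real N - 1) * B^2" using NN by simp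
      show ?thesis by (intro add_nonneg_nonneg) (use t nn[of x] B0 A0 in auto)
    qed
    show "integrable q (\<lambda>x. (f x)^2 + 2 * f x * (real N * B) + (real N * A + real N * (real N - 1) * B^2))"
      using i1 i2 by auto
  qed
  also have "measure_pmf.expectation q (\<lambda>x. (f x)^2 + 2 * f x * (real N * B) + (real N * A + real N * (real N - 1) * B^2))
     = real (Suc N) * A + real (Suc N) * (real (Suc N) - 1) * B^2"
    using i1 i2 by (simp add: integral_add A_def B_def algebra_simps power2_eq_square)
  finally have r2: "integrable (replicate_pmf (Suc N) q) (\<lambda>xs. (?S xs)^2) \<and> measure_pmf.expectation (replicate_pmf (Suc N) q) (\<lambda>xs. (?S xs)^2) = real (Suc N) * A + real (Suc N) * (real (Suc N) - 1) * B^2"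
    by (intro G) (use B0 A0 in auto)
  show ?case using r1 r2 unfolding A_def B_def by blast
qed


lemma Ew1:
  assumes "abs_cont p q"
  shows "integrable q (imp_weight p q) \<and> measure_pmf.expectation q (imp_weight p q) = 1"
proof -
  have pt: "ennreal (pmf q x) * ennreal (imp_weight p q x) = ennreal (pmf p x)" for x
  proof (cases "pmf q x = 0")
    case True
    then show ?thesis using assms by (simp add: abs_cont_def)
  next
    case False
    then show ?thesis by (simp add: imp_weight_def ennreal_mult[symmetric])
  qed
  have "(\<integral>\<^sup>+x. ennreal (imp_weight p q x) \<partial>q) = (\<integral>\<^sup>+x. ennreal (pmf p x) \<partial>count_space UNIV)"
    by (simp add: nn_integral_measure_pmf pt)
  also have "\<dots> = ennreal 1"
    by (simp add: nn_integral_pmf measure_pmf.emeasure_space_1[simplified])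
  finally show ?thesis by (intro G) (auto simp: w_nonneg)
qed



lemma Ew2:
  fixes q :: "'b pmf"
  assumes "integrable q (\<lambda>x. (imp_weight p q x)^4)"
  shows "integrable q (\<lambda>x. (imp_weight p q x)^2)"
proof (rule Bochner_Integration.integrable_bound[where f="\<lambda>x. 1 + (imp_weight p q x)^4"])
  show "integrable q (\<lambda>x. 1 + (imp_weight p q x)^4)" using assms by simp
  show "AE x in measure_pmf q. norm ((imp_weight p q x)^2) \<le> norm (1 + (imp_weight p q x)^4)"
  proof (intro AE_I2)
    fix x
    have "(imp_weight p q x)^2 \<le> 1 + (imp_weight p q x)^4"
    proof -
      have t: "t \<le> 1 + t^2" for t :: real
      proof (cases "t \<le> 1")
        case True then show ?thesis by (smt (verit) zero_le_power2)
      next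
        case False then have "1 * t \<le> t * t" by (intro mult_right_mono) auto
        then show ?thesis by (simp add: power2_eq_square)
      qed
      have "(imp_weight p q x)^4 = ((imp_weight p q x)^2)^2" by simp
      then show ?thesis using t[of "(imp_weight p q x)^2"] by simp
    qed
    then show "norm ((imp_weight p q x)^2) \<le> norm (1 + (imp_weight p q x)^4)" by simp
  qed
qed simp

lemma fx_eq: "(\<lambda>y. imp_weight p q y * (if y = x then 1 else 0)) = (\<lambda>y. imp_weight p q x * indicator {x} y)"
  by (auto simp: indicator_def)

lemma fx_sq_eq: "(\<lambda>y. (imp_weight p q y * (if y = x then 1 else 0))^2) = (\<lambda>y. (imp_weight p q x)^2 * indicator {x} y)"
  by (auto simp: indicator_def)

lemma fx_facts:
  fixes q :: "'b pmf"
  assumes "abs_cont p q"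
  shows "integrable q (\<lambda>y. imp_weight p q y * (if y = x then 1 else 0))"
    "integrable q (\<lambda>y. (imp_weight p q y * (if y = x then 1 else 0))^2)"
    "measure_pmf.expectation q (\<lambda>y. imp_weight p q y * (if y = x then 1 else 0)) = pmf p x"
    "measure_pmf.expectation q (\<lambda>y. (imp_weight p q y * (if y = x then 1 else 0))^2) = pmf p x * imp_weight p q x"
proof -
  show "integrable q (\<lambda>y. imp_weight p q y * (if y = x then 1 else 0))"
    unfolding fx_eq by (intro integrable_mult_right integrable_real_indicator) (auto simp: less_top emeasure_pmf_single)
  show "integrable q (\<lambda>y. (imp_weight p q y * (if y = x then 1 else 0))^2)"
    unfolding fx_sq_eq by (intro integrable_mult_right integrable_real_indicator) (auto simp: less_top emeasure_pmf_single)
  show "measure_pmf.expectation q (\<lambda>y. imp_weight p q y * (if y = x then 1 else 0)) = pmf p x"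
    unfolding fx_eq using assms by (auto simp: measure_pmf_single imp_weight_def abs_cont_def)
  show "measure_pmf.expectation q (\<lambda>y. (imp_weight p q y * (if y = x then 1 else 0))^2) = pmf p x * imp_weight p q x"
    unfolding fx_sq_eq using assms by (auto simp: measure_pmf_single imp_weight_def abs_cont_def power2_eq_square)
qed

lemma sq_aff:
  fixes M :: "'b pmf" and a b :: real
  assumes "integrable M X" "integrable M (\<lambda>x. (X x)^2)"
  shows "integrable M (\<lambda>x. (a + b * X x)^2) \<and>
    measure_pmf.expectation M (\<lambda>x. (a + b * X x)^2) = a^2 + 2*a*b * measure_pmf.expectation M X + b^2 * measure_pmf.expectation M (\<lambda>x. (X x)^2)"
proof -
  have eq: "(\<lambda>x. (a + b * X x)^2) = (\<lambda>x. a^2 + (2*a*b) * X x + b^2 * (X x)^2)"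
    by (auto simp: power2_eq_square algebra_simps)
  show ?thesis unfolding eq using assms by (simp add: integral_add)
qed



lemma SS_moments:
  fixes p q :: "'b pmf"
  assumes ac: "abs_cont p q" and i4: "integrable q (\<lambda>x. (imp_weight p q x)^4)"
  shows "integrable (replicate_pmf N q) (SS p q) \<and>
     measure_pmf.expectation (replicate_pmf N q) (SS p q) = real N \<and>
     integrable (replicate_pmf N q) (\<lambda>xs. (SS p q xs)^2) \<and>
     measure_pmf.expectation (replicate_pmf N q) (\<lambda>xs. (SS p q xs)^2)
        = real N * measure_pmf.expectation q (\<lambda>x. (imp_weight p q x)^2) + real N * (real N - 1)"
proof -
  have e: "SS p q = (\<lambda>xs. sum_list (map (imp_weight p q) xs))" by (simp add: SS_def fun_eq_iff)
  show ?thesis unfolding e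
    using moments[of "imp_weight p q" q N] Ew1[OF ac] Ew2[OF i4] by (simp add: w_nonneg)
qed

lemma cnt_moments:
  fixes p q :: "'b pmf"
  assumes ac: "abs_cont p q"
  shows "integrable (replicate_pmf N q) (\<lambda>xs. cnt p q xs x) \<and>
     measure_pmf.expectation (replicate_pmf N q) (\<lambda>xs. cnt p q xs x) = real N * pmf p x \<and>
     integrable (replicate_pmf N q) (\<lambda>xs. (cnt p q xs x)^2) \<and>
     measure_pmf.expectation (replicate_pmf N q) (\<lambda>xs. (cnt p q xs x)^2)
        = real N * (pmf p x * imp_weight p q x) + real N * (real N - 1) * (pmf p x)^2"
proof -
  have e: "(\<lambda>xs. cnt p q xs x) = (\<lambda>xs. sum_list (map (\<lambda>y. imp_weight p q y * (if y = x then 1 else 0)) xs))"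
    by (simp add: cnt_def fun_eq_iff)
  show ?thesis unfolding cnt_def
    using moments[of "\<lambda>y. imp_weight p q y * (if y = x then 1 else 0)" q N] fx_facts[OF ac, of x]
    by (simp add: w_nonneg)
qed

lemma Y_moments:
  fixes p q :: "'b pmf"
  assumes ac: "abs_cont p q" and i4: "integrable q (\<lambda>x. (imp_weight p q x)^4)" and N: "N > 0"
  shows "integrable (replicate_pmf N q) (\<lambda>xs. 1 - SS p q xs / real N) \<and>
     integrable (replicate_pmf N q) (\<lambda>xs. (1 - SS p q xs / real N)^2) \<and>
     measure_pmf.expectation (replicate_pmf N q) (\<lambda>xs. (1 - SS p q xs / real N)^2)
        = (measure_pmf.expectation q (\<lambda>x. (imp_weight p q x)^2) - 1) / real N"
proof -
  note m = SS_moments[OF ac i4, of N]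
  have e: "(\<lambda>xs. (1 - SS p q xs / real N)^2) = (\<lambda>xs. (1 + (- 1 / real N) * SS p q xs)^2)"
    by (simp add: fun_eq_iff)
  note s = sq_aff[of "replicate_pmf N q" "SS p q" 1 "- 1 / real N"]
  have "measure_pmf.expectation (replicate_pmf N q) (\<lambda>xs. (1 - SS p q xs / real N)^2)
     = 1 + 2 * (- 1 / real N) * real N + (- 1 / real N)^2 * (real N * measure_pmf.expectation q (\<lambda>x. (imp_weight p q x)^2) + real N * (real N - 1))"
    unfolding e using s m by simp
  also have "\<dots> = (measure_pmf.expectation q (\<lambda>x. (imp_weight p q x)^2) - 1) / real N"
    using N by (simp add: field_simps power2_eq_square)
  finally show ?thesis unfolding e using s m by simp
qed


lemma hat_integrable: "integrable (measure_pmf M) (\<lambda>xs. hat_p p q xs x)"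
  by (rule measure_pmf.integrable_const_bound[where B=1]) (auto simp: hat_nonneg hat_le1)

lemma bias_pt:
  fixes p q :: "'b pmf"
  assumes ac: "abs_cont p q" and i4: "integrable q (\<lambda>x. (imp_weight p q x)^4)" and N: "N > 0"
  shows "\<bar>bar_p p q N x - pmf p x\<bar> \<le>
     measure_pmf.expectation (replicate_pmf N q) (\<lambda>xs. hat_p p q xs x * \<bar>1 - SS p q xs / real N\<bar>)"
    "integrable (replicate_pmf N q) (\<lambda>xs. hat_p p q xs x * \<bar>1 - SS p q xs / real N\<bar>)"
proof -
  let ?M = "replicate_pmf N q"
  let ?Y = "\<lambda>xs. 1 - SS p q xs / real N"
  have iY: "integrable ?M ?Y" using Y_moments[OF ac i4 N] by simp
  have ic: "integrable ?M (\<lambda>xs. cnt p q xs x)" and ec: "measure_pmf.expectation ?M (\<lambda>xs. cnt p q xs x) = real N * pmf p x"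
    using cnt_moments[OF ac, of N x] by auto
  show ig: "integrable ?M (\<lambda>xs. hat_p p q xs x * \<bar>?Y xs\<bar>)"
  proof (rule Bochner_Integration.integrable_bound[where f="\<lambda>xs. \<bar>?Y xs\<bar>"])
    show "integrable ?M (\<lambda>xs. \<bar>?Y xs\<bar>)" using iY by simp
    show "AE xs in measure_pmf ?M. norm (hat_p p q xs x * \<bar>?Y xs\<bar>) \<le> norm \<bar>?Y xs\<bar>"
      by (intro AE_I2) (simp add: abs_mult hat_nonneg hat_le1 mult_left_le_one_le)
  qed simp
  have pt: "hat_p p q xs x - cnt p q xs x / real N = hat_p p q xs x * ?Y xs" for xs
    using N by (simp add: cnt_hat field_simps)
  have "bar_p p q N x - pmf p x = measure_pmf.expectation ?M (\<lambda>xs. hat_p p q xs x) - measure_pmf.expectation ?M (\<lambda>xs. cnt p q xs x / real N)"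
    using ec N by (simp add: bar_p_def)
  also have "\<dots> = measure_pmf.expectation ?M (\<lambda>xs. hat_p p q xs x - cnt p q xs x / real N)"
    by (subst Bochner_Integration.integral_diff) (use ic hat_integrable in auto)
  also have "\<dots> = measure_pmf.expectation ?M (\<lambda>xs. hat_p p q xs x * ?Y xs)"
    by (simp add: pt)
  finally have eq: "bar_p p q N x - pmf p x = measure_pmf.expectation ?M (\<lambda>xs. hat_p p q xs x * ?Y xs)" .
  have i2: "integrable ?M (\<lambda>xs. hat_p p q xs x * ?Y xs)"
    using ic hat_integrable[of ?M p q x] unfolding pt[symmetric] by simp
  show "\<bar>bar_p p q N x - pmf p x\<bar> \<le> measure_pmf.expectation ?M (\<lambda>xs. hat_p p q xs x * \<bar>?Y xs\<bar>)"
  proof -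
    have "\<bar>measure_pmf.expectation ?M (\<lambda>xs. hat_p p q xs x * ?Y xs)\<bar> \<le> measure_pmf.expectation ?M (\<lambda>xs. \<bar>hat_p p q xs x * ?Y xs\<bar>)"
      by (rule integral_abs_bound)
    also have "\<dots> = measure_pmf.expectation ?M (\<lambda>xs. hat_p p q xs x * \<bar>?Y xs\<bar>)"
      by (simp add: abs_mult hat_nonneg)
    finally show ?thesis unfolding eq .
  qed
qed

lemma bias_sum:
  fixes p q :: "'b pmf"
  assumes ac: "abs_cont p q" and i4: "integrable q (\<lambda>x. (imp_weight p q x)^4)" and N: "N > 0"
    and F: "finite F"
  shows "(\<Sum>x\<in>F. \<bar>bar_p p q N x - pmf p x\<bar>) \<le> measure_pmf.expectation q (\<lambda>x. (imp_weight p q x)^2) / sqrt (real N)"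
proof -
  let ?M = "replicate_pmf N q"
  let ?Y = "\<lambda>xs. 1 - SS p q xs / real N"
  let ?A = "measure_pmf.expectation q (\<lambda>x. (imp_weight p q x)^2)"
  define s where "s = sqrt (real N)"
  have s0: "s > 0" using N by (simp add: s_def)
  have ss: "s * s = real N" using N by (simp add: s_def)
  have iY: "integrable ?M ?Y" and iY2: "integrable ?M (\<lambda>xs. (?Y xs)^2)"
    and eY2: "measure_pmf.expectation ?M (\<lambda>xs. (?Y xs)^2) = (?A - 1) / real N"
    using Y_moments[OF ac i4 N] by auto
  have "(\<Sum>x\<in>F. \<bar>bar_p p q N x - pmf p x\<bar>) \<le> (\<Sum>x\<in>F. measure_pmf.expectation ?M (\<lambda>xs. hat_p p q xs x * \<bar>?Y xs\<bar>))"
    by (intro sum_mono bias_pt[OF ac i4 N])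
  also have "\<dots> = measure_pmf.expectation ?M (\<lambda>xs. \<Sum>x\<in>F. hat_p p q xs x * \<bar>?Y xs\<bar>)"
    by (subst Bochner_Integration.integral_sum) (use bias_pt(2)[OF ac i4 N] in auto)
  also have "\<dots> \<le> measure_pmf.expectation ?M (\<lambda>xs. (s * (?Y xs)^2 + 1 / s) / 2)"
  proof (rule integral_mono)
    show "integrable ?M (\<lambda>xs. \<Sum>x\<in>F. hat_p p q xs x * \<bar>?Y xs\<bar>)"
      by (intro Bochner_Integration.integrable_sum bias_pt(2)[OF ac i4 N])
    show "integrable ?M (\<lambda>xs. (s * (?Y xs)^2 + 1 / s) / 2)" using iY2 by simp
    fix xs
    have "(\<Sum>x\<in>F. hat_p p q xs x * \<bar>?Y xs\<bar>) = (\<Sum>x\<in>F. hat_p p q xs x) * \<bar>?Y xs\<bar>"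
      by (simp add: sum_distrib_right)
    also have "\<dots> \<le> \<bar>?Y xs\<bar>"
      using hat_sum_le[OF F, of p q xs] by (simp add: mult_left_le_one_le sum_nonneg hat_nonneg)
    also have "\<dots> \<le> (s * (?Y xs)^2 + 1 / s) / 2"
    proof -
      have "0 \<le> (s * \<bar>?Y xs\<bar> - 1)^2" by simp
      then have "2 * s * \<bar>?Y xs\<bar> \<le> s * s * (?Y xs)^2 + 1"
        by (simp add: power2_eq_square algebra_simps)
      then show ?thesis using s0 by (simp add: field_simps power2_eq_square)
    qed
    finally show "(\<Sum>x\<in>F. hat_p p q xs x * \<bar>?Y xs\<bar>) \<le> (s * (?Y xs)^2 + 1 / s) / 2" .
  qed
  also have "\<dots> = (s * ((?A - 1) / real N) + 1 / s) / 2"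
    using iY2 eY2 by simp
  also have "\<dots> = ?A / (2 * s)"
    using s0 by (simp add: ss[symmetric] field_simps)
  also have "\<dots> \<le> ?A / s"
    using s0 by (simp add: divide_left_mono frac_le)
  finally show ?thesis unfolding s_def .
qed


lemma L_enn:
  fixes g :: "'b \<Rightarrow> real"
  assumes g0: "\<And>x. g x \<ge> 0"
  shows "ennreal (infsum g UNIV) \<le> (\<integral>\<^sup>+x. ennreal (g x) \<partial>count_space UNIV)"
proof (cases "g summable_on UNIV")
  case True
  have "ennreal (infsum g UNIV) = (SUP F\<in>{F. finite F \<and> F \<subseteq> UNIV}. ennreal (sum g F))"
    by (rule infsum_nonneg_is_SUPREMUM_ennreal) (use True g0 in auto)
  also have "\<dots> \<le> (\<integral>\<^sup>+x. ennreal (g x) \<partial>count_space UNIV)"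
  proof (rule SUP_least)
    fix F :: "'b set" assume "F \<in> {F. finite F \<and> F \<subseteq> UNIV}"
    then have F: "finite F" by simp
    have "ennreal (sum g F) = (\<Sum>x\<in>F. ennreal (g x))" using g0 by (simp add: sum_ennreal)
    also have "\<dots> = (\<integral>\<^sup>+x. ennreal (g x) \<partial>count_space F)" using F by (simp add: nn_integral_count_space_finite)
    also have "\<dots> = (\<integral>\<^sup>+x. ennreal (g x) * indicator F x \<partial>count_space UNIV)"
      by (simp add: nn_integral_count_space_indicator)
    also have "\<dots> \<le> (\<integral>\<^sup>+x. ennreal (g x) \<partial>count_space UNIV)"
      by (intro nn_integral_mono) (auto simp: indicator_def)
    finally show "ennreal (sum g F) \<le> (\<integral>\<^sup>+x. ennreal (g x) \<partial>count_space UNIV)" .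
  qed
  finally show ?thesis .
next
  case False
  then show ?thesis by (simp add: infsum_not_exists)
qed

lemma D_moment:
  fixes p q :: "'b pmf"
  assumes ac: "abs_cont p q" and N: "N > 0"
  shows "integrable (replicate_pmf N q) (\<lambda>xs. (cnt p q xs x / real N - pmf p x)^2) \<and>
    measure_pmf.expectation (replicate_pmf N q) (\<lambda>xs. (cnt p q xs x / real N - pmf p x)^2) \<le> pmf p x * imp_weight p q x / real N"
proof -
  have e: "(\<lambda>xs. (cnt p q xs x / real N - pmf p x)^2) = (\<lambda>xs. (- pmf p x + (1 / real N) * cnt p q xs x)^2)"
    by (simp add: fun_eq_iff power2_commute)
  note m = cnt_moments[OF ac, of N x]
  note s = sq_aff[of "replicate_pmf N q" "\<lambda>xs. cnt p q xs x" "- pmf p x" "1 / real N"]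
  have "measure_pmf.expectation (replicate_pmf N q) (\<lambda>xs. (cnt p q xs x / real N - pmf p x)^2)
     = (- pmf p x)^2 + 2 * (- pmf p x) * (1 / real N) * (real N * pmf p x) + (1 / real N)^2 * (real N * (pmf p x * imp_weight p q x) + real N * (real N - 1) * (pmf p x)^2)"
    unfolding e using s m by simp
  also have "\<dots> = pmf p x * imp_weight p q x / real N - (pmf p x)^2 / real N"
    using N by (simp add: field_simps power2_eq_square)
  also have "\<dots> \<le> pmf p x * imp_weight p q x / real N" by simp
  finally show ?thesis unfolding e using s m by simp
qed

lemma sum_pw:
  fixes p q :: "'b pmf"
  assumes ac: "abs_cont p q"
  shows "(\<integral>\<^sup>+x. ennreal (pmf p x * imp_weight p q x) \<partial>count_space UNIV) = (\<integral>\<^sup>+x. ennreal ((imp_weight p q x)^2) \<partial>q)"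
proof -
  have pt: "ennreal (pmf q x) * ennreal ((imp_weight p q x)^2) = ennreal (pmf p x * imp_weight p q x)" for x
  proof (cases "pmf q x = 0")
    case True
    then show ?thesis using ac by (simp add: abs_cont_def imp_weight_def)
  next
    case False
    then show ?thesis by (simp add: imp_weight_def ennreal_mult[symmetric] power2_eq_square)
  qed
  show ?thesis by (simp add: nn_integral_measure_pmf pt)
qed

lemma var_bound:
  fixes p q :: "('a::finite) list pmf"
  assumes ac: "abs_cont p q" and i4: "integrable q (\<lambda>x. (imp_weight p q x)^4)" and N: "N > 0"
  shows "measure_pmf.expectation (replicate_pmf N q) (\<lambda>xs. norm2sq (\<lambda>x. hat_p p q xs x - pmf p x))
     \<le> 4 * measure_pmf.expectation q (\<lambda>x. (imp_weight p q x)^2) / real N"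
proof -
  let ?M = "replicate_pmf N q"
  let ?Y = "\<lambda>xs. 1 - SS p q xs / real N"
  let ?D = "\<lambda>xs x. cnt p q xs x / real N - pmf p x"
  let ?A = "measure_pmf.expectation q (\<lambda>x. (imp_weight p q x)^2)"
  let ?Z = "\<lambda>xs. norm2sq (\<lambda>x. hat_p p q xs x - pmf p x)"
  have A0: "?A \<ge> 0" by simp
  have iY2: "integrable ?M (\<lambda>xs. (?Y xs)^2)"
    and eY2: "measure_pmf.expectation ?M (\<lambda>xs. (?Y xs)^2) = (?A - 1) / real N"
    using Y_moments[OF ac i4 N] by auto
  have Z0: "?Z xs \<ge> 0" for xs unfolding norm2sq_def by (rule infsum_nonneg) simp
  have ptw: "ennreal (?Z xs) \<le> ennreal (2 * (?Y xs)^2) + (\<integral>\<^sup>+x. ennreal (2 * (?D xs x)^2) \<partial>count_space UNIV)" for xs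
  proof -
    have "ennreal (?Z xs) \<le> (\<integral>\<^sup>+x. ennreal ((hat_p p q xs x - pmf p x)^2) \<partial>count_space UNIV)"
      unfolding norm2sq_def by (rule L_enn) simp
    also have "\<dots> \<le> (\<integral>\<^sup>+x. ennreal (2 * (?Y xs)^2) * ennreal (hat_p p q xs x) + ennreal (2 * (?D xs x)^2) \<partial>count_space UNIV)"
    proof (rule nn_integral_mono)
      fix x
      let ?h = "hat_p p q xs x"
      have h0: "?h \<ge> 0" and h1: "?h \<le> 1" by (rule hat_nonneg, rule hat_le1)
      have dec: "?h - pmf p x = ?h * ?Y xs + ?D xs x"
        using N by (simp add: cnt_hat field_simps)
      have "(?h - pmf p x)^2 \<le> 2 * (?h * ?Y xs)^2 + 2 * (?D xs x)^2"
        unfolding dec by (smt (verit, best) zero_le_power2 power2_sum power2_diff)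
      also have "(?h * ?Y xs)^2 \<le> (?Y xs)^2 * ?h"
      proof -
        have "?h * ?h \<le> ?h" using h0 h1 by (simp add: mult_left_le_one_le)
        then have "(?Y xs)^2 * (?h * ?h) \<le> (?Y xs)^2 * ?h" by (intro mult_left_mono) auto
        then show ?thesis by (simp add: power2_eq_square algebra_simps)
      qed
      then have "2 * (?h * ?Y xs)^2 + 2 * (?D xs x)^2 \<le> 2 * (?Y xs)^2 * ?h + 2 * (?D xs x)^2" by simp
      finally have r: "(?h - pmf p x)^2 \<le> 2 * (?Y xs)^2 * ?h + 2 * (?D xs x)^2" .
      have "ennreal ((?h - pmf p x)^2) \<le> ennreal (2 * (?Y xs)^2 * ?h + 2 * (?D xs x)^2)"
        using r by (rule ennreal_leI)
      also have "\<dots> = ennreal (2 * (?Y xs)^2) * ennreal ?h + ennreal (2 * (?D xs x)^2)"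
        using h0 by (simp add: ennreal_plus[symmetric] ennreal_mult[symmetric] del: ennreal_plus)
      finally show "ennreal ((?h - pmf p x)^2) \<le> ennreal (2 * (?Y xs)^2) * ennreal ?h + ennreal (2 * (?D xs x)^2)" .
    qed
    also have "\<dots> = ennreal (2 * (?Y xs)^2) * (\<integral>\<^sup>+x. ennreal (hat_p p q xs x) \<partial>count_space UNIV) + (\<integral>\<^sup>+x. ennreal (2 * (?D xs x)^2) \<partial>count_space UNIV)"
      by (simp add: nn_integral_add nn_integral_cmult)
    also have "\<dots> \<le> ennreal (2 * (?Y xs)^2) * 1 + (\<integral>\<^sup>+x. ennreal (2 * (?D xs x)^2) \<partial>count_space UNIV)"
      by (intro add_mono mult_left_mono nn_hat_le1) auto
    finally show ?thesis by simp
  qed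
  have "(\<integral>\<^sup>+xs. ennreal (?Z xs) \<partial>?M) \<le> (\<integral>\<^sup>+xs. ennreal (2 * (?Y xs)^2) + (\<integral>\<^sup>+x. ennreal (2 * (?D xs x)^2) \<partial>count_space UNIV) \<partial>?M)"
    by (intro nn_integral_mono ptw)
  also have "\<dots> = (\<integral>\<^sup>+xs. ennreal (2 * (?Y xs)^2) \<partial>?M) + (\<integral>\<^sup>+xs. (\<integral>\<^sup>+x. ennreal (2 * (?D xs x)^2) \<partial>count_space UNIV) \<partial>?M)"
    by (simp add: nn_integral_add)
  also have "(\<integral>\<^sup>+xs. ennreal (2 * (?Y xs)^2) \<partial>?M) + (\<integral>\<^sup>+xs. (\<integral>\<^sup>+x. ennreal (2 * (?D xs x)^2) \<partial>count_space UNIV) \<partial>?M)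
     \<le> ennreal (2 * ((?A - 1) / real N)) + ennreal (2 / real N) * ennreal ?A"
  proof (rule add_mono)
    show "(\<integral>\<^sup>+xs. ennreal (2 * (?Y xs)^2) \<partial>?M) \<le> ennreal (2 * ((?A - 1) / real N))"
      using iY2 eY2 by (subst G2) auto
    have "(\<integral>\<^sup>+xs. (\<integral>\<^sup>+x. ennreal (2 * (?D xs x)^2) \<partial>count_space UNIV) \<partial>?M)
      = (\<integral>\<^sup>+x. (\<integral>\<^sup>+xs. ennreal (2 * (?D xs x)^2) \<partial>?M) \<partial>count_space UNIV)"
      by (rule nn_integral_count_space_nn_integral) auto
    also have "\<dots> \<le> (\<integral>\<^sup>+x. ennreal (2 / real N) * ennreal (pmf p x * imp_weight p q x) \<partial>count_space UNIV)"
    proof (rule nn_integral_mono)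
      fix x
      note d = D_moment[OF ac N, of x]
      have "(\<integral>\<^sup>+xs. ennreal (2 * (?D xs x)^2) \<partial>?M) = ennreal (measure_pmf.expectation ?M (\<lambda>xs. 2 * (?D xs x)^2))"
        by (rule G2) (use d in auto)
      also have "\<dots> \<le> ennreal (2 * (pmf p x * imp_weight p q x / real N))"
        using d by (intro ennreal_leI) simp
      also have "\<dots> = ennreal (2 / real N) * ennreal (pmf p x * imp_weight p q x)"
        by (simp add: ennreal_mult[symmetric] w_nonneg del: ennreal_mult)
      finally show "(\<integral>\<^sup>+xs. ennreal (2 * (?D xs x)^2) \<partial>?M) \<le> ennreal (2 / real N) * ennreal (pmf p x * imp_weight p q x)" .
    qed
    also have "\<dots> = ennreal (2 / real N) * ennreal ?A"
      by (simp add: nn_integral_cmult sum_pw[OF ac] G2 Ew2[OF i4])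
    finally show "(\<integral>\<^sup>+xs. (\<integral>\<^sup>+x. ennreal (2 * (?D xs x)^2) \<partial>count_space UNIV) \<partial>?M) \<le> ennreal (2 / real N) * ennreal ?A" .
  qed
  finally have le: "(\<integral>\<^sup>+xs. ennreal (?Z xs) \<partial>?M) \<le> ennreal (2 * ((?A - 1) / real N)) + ennreal (2 / real N) * ennreal ?A" .
  also have "\<dots> \<le> ennreal (2 * ?A / real N) + ennreal (2 * ?A / real N)"
    using N A0 by (intro add_mono ennreal_leI) (auto simp: ennreal_mult[symmetric] divide_right_mono simp del: ennreal_mult)
  also have "\<dots> = ennreal (4 * ?A / real N)"
    using N A0 by (simp add: ennreal_plus[symmetric] del: ennreal_plus)
  finally have le2: "(\<integral>\<^sup>+xs. ennreal (?Z xs) \<partial>?M) \<le> ennreal (4 * ?A / real N)" .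
  have "measure_pmf.expectation ?M ?Z = enn2real (\<integral>\<^sup>+xs. ennreal (?Z xs) \<partial>?M)"
    by (rule integral_eq_nn_integral) (auto simp: Z0)
  also have "\<dots> \<le> enn2real (ennreal (4 * ?A / real N))"
    by (rule enn2real_mono[OF le2]) simp
  also have "\<dots> = 4 * ?A / real N" using A0 by simp
  finally show ?thesis .
qed


lemma infsum_fin_bound:
  fixes g :: "'b \<Rightarrow> real"
  assumes g0: "\<And>x. g x \<ge> 0" and b: "\<And>F. finite F \<Longrightarrow> sum g F \<le> B"
  shows "infsum g UNIV \<le> B"
proof -
  have "g summable_on UNIV"
    by (rule nonneg_bdd_above_summable_on) (use g0 b in \<open>auto intro!: bdd_aboveI\<close>)
  then show ?thesis by (rule infsum_le_finite_sums) (use b in auto)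
qed

theorem theorem1:
  fixes p q :: "('a::finite) list pmf"
  assumes "abs_cont p q"
    and "integrable (measure_pmf q) (\<lambda>x. (imp_weight p q x)^4)"
  shows "(\<lambda>N. norm1 (\<lambda>x. bar_p p q N x - pmf p x))
           \<in> O(\<lambda>N. sqrt ((1 + chi2 p q) / real N)) \<and>
         (\<lambda>N. norm2sq (\<lambda>x. bar_p p q N x - pmf p x))
           \<in> O(\<lambda>N. (1 + chi2 p q) / real N) \<and>
         (\<lambda>N. measure_pmf.expectation (replicate_pmf N q)
                (\<lambda>xs. norm2sq (\<lambda>x. hat_p p q xs x - pmf p x)))
           \<in> O(\<lambda>N. (1 + chi2 p q) / real N)"
proof -
  note ac = assms(1) and i4 = assms(2)
  define A where "A = measure_pmf.expectation q (\<lambda>x. (imp_weight p q x)^2)"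
  define c where "c = 1 + chi2 p q"
  have A0: "A \<ge> 0" unfolding A_def by simp
  have c0: "c > 0" unfolding c_def chi2_def
    by (smt (verit) Bochner_Integration.integral_nonneg zero_le_power2)
  have ev: "eventually (\<lambda>N::nat. N > 0) at_top" by (rule eventually_gt_at_top)
  have B1: "(\<Sum>x\<in>F. \<bar>bar_p p q N x - pmf p x\<bar>) \<le> A / sqrt (real N)" if "N > 0" "finite F" for N F
    unfolding A_def by (rule bias_sum[OF ac i4 that])
  have O1: "norm1 (\<lambda>x. bar_p p q N x - pmf p x) \<le> A / sqrt (real N)" if N: "N > 0" for N
    unfolding norm1_def by (rule infsum_fin_bound) (use B1[OF N] in auto)
  have O2: "norm2sq (\<lambda>x. bar_p p q N x - pmf p x) \<le> A^2 / real N" if N: "N > 0" for N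
    unfolding norm2sq_def
  proof (rule infsum_fin_bound)
    fix F :: "'a list set" assume F: "finite F"
    let ?B = "A / sqrt (real N)"
    have pt: "\<bar>bar_p p q N x - pmf p x\<bar> \<le> ?B" for x
      using B1[OF N, of "{x}"] by simp
    have "(\<Sum>x\<in>F. (bar_p p q N x - pmf p x)^2) \<le> (\<Sum>x\<in>F. ?B * \<bar>bar_p p q N x - pmf p x\<bar>)"
    proof (rule sum_mono)
      fix x
      have "(bar_p p q N x - pmf p x)^2 = \<bar>bar_p p q N x - pmf p x\<bar> * \<bar>bar_p p q N x - pmf p x\<bar>"
        by (simp add: power2_eq_square)
      also have "\<dots> \<le> ?B * \<bar>bar_p p q N x - pmf p x\<bar>"
        using pt[of x] by (intro mult_right_mono) auto
      finally show "(bar_p p q N x - pmf p x)^2 \<le> ?B * \<bar>bar_p p q N x - pmf p x\<bar>" .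
    qed
    also have "\<dots> = ?B * (\<Sum>x\<in>F. \<bar>bar_p p q N x - pmf p x\<bar>)" by (simp add: sum_distrib_left)
    also have "\<dots> \<le> ?B * ?B"
      using B1[OF N F] A0 by (intro mult_left_mono) auto
    also have "\<dots> = A^2 / real N" using N by (simp add: power2_eq_square)
    finally show "(\<Sum>x\<in>F. (bar_p p q N x - pmf p x)^2) \<le> A^2 / real N" .
  qed simp
  have O3: "measure_pmf.expectation (replicate_pmf N q) (\<lambda>xs. norm2sq (\<lambda>x. hat_p p q xs x - pmf p x)) \<le> 4 * A / real N"
    if N: "N > 0" for N
    unfolding A_def by (rule var_bound[OF ac i4 N])
  have n1: "norm1 f \<ge> 0" for f :: "'a list \<Rightarrow> real" unfolding norm1_def by (rule infsum_nonneg) simp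
  have n2: "norm2sq f \<ge> 0" for f :: "'a list \<Rightarrow> real" unfolding norm2sq_def by (rule infsum_nonneg) simp
  have n3: "measure_pmf.expectation (replicate_pmf N q) (\<lambda>xs. norm2sq (\<lambda>x. hat_p p q xs x - pmf p x)) \<ge> 0" for N
    by (rule Bochner_Integration.integral_nonneg) (simp add: n2)
  have R1: "(\<lambda>N. norm1 (\<lambda>x. bar_p p q N x - pmf p x)) \<in> O(\<lambda>N. sqrt (c / real N))"
  proof (rule bigoI[where c="A / sqrt c"])
    show "\<forall>\<^sub>F N in at_top. norm (norm1 (\<lambda>x. bar_p p q N x - pmf p x)) \<le> A / sqrt c * norm (sqrt (c / real N))"
      using ev
    proof eventually_elim
      case (elim N)
      have "norm (norm1 (\<lambda>x. bar_p p q N x - pmf p x)) \<le> A / sqrt (real N)" using O1[OF elim] n1 by simp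
      also have "\<dots> = A / sqrt c * norm (sqrt (c / real N))"
        using c0 elim by (simp add: real_sqrt_divide)
      finally show ?case .
    qed
  qed
  have R2: "(\<lambda>N. norm2sq (\<lambda>x. bar_p p q N x - pmf p x)) \<in> O(\<lambda>N. c / real N)"
  proof (rule bigoI[where c="A^2 / c"])
    show "\<forall>\<^sub>F N in at_top. norm (norm2sq (\<lambda>x. bar_p p q N x - pmf p x)) \<le> A^2 / c * norm (c / real N)"
      using ev
    proof eventually_elim
      case (elim N)
      have "norm (norm2sq (\<lambda>x. bar_p p q N x - pmf p x)) \<le> A^2 / real N" using O2[OF elim] n2 by simp
      also have "\<dots> = A^2 / c * norm (c / real N)"
        using c0 elim by simp
      finally show ?case .
    qed
  qed
  have R3: "(\<lambda>N. measure_pmf.expectation (replicate_pmf N q) (\<lambda>xs. norm2sq (\<lambda>x. hat_p p q xs x - pmf p x))) \<in> O(\<lambda>N. c / real N)"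
  proof (rule bigoI[where c="4 * A / c"])
    show "\<forall>\<^sub>F N in at_top. norm (measure_pmf.expectation (replicate_pmf N q) (\<lambda>xs. norm2sq (\<lambda>x. hat_p p q xs x - pmf p x))) \<le> 4 * A / c * norm (c / real N)"
      using ev
    proof eventually_elim
      case (elim N)
      have "norm (measure_pmf.expectation (replicate_pmf N q) (\<lambda>xs. norm2sq (\<lambda>x. hat_p p q xs x - pmf p x))) \<le> 4 * A / real N"
        using O3[OF elim] n3[of N] by simp
      also have "\<dots> = 4 * A / c * norm (c / real N)"
        using c0 elim by simp
      finally show ?case .
    qed
  qed
  show ?thesis using R1 R2 R3 unfolding c_def by blast
qed

end
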